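(* Let $\nu\in(0,1]$ and $\alpha\in(0,2]$. Then $$L_{\alpha,\nu}\stackrel{d}{=} L_{\alpha}\cdot Z_{\nu,1}^{-1/\alpha},$$ where $L_\alpha$ and $Z_{\nu,1}$ are independent. That is, for such parameters the generalized Linnik distribution is a scale mixture of ordinary Linnik distributions.
   Context: $\stackrel{d}{=}$ denotes equality in distribution. For $\alpha\in(0,2]$, $\nu>0$, $L_{\alpha,\nu}$ denotes a random variable with characteristic function $(1+|t|^{\alpha})^{-\nu}$, $t\in\mathbb{R}$, and $L_\alpha=L_{\alpha,1}$ (Linnik distribution, characteristic function $(1+|t|^\alpha)^{-1}$). For $r\in(0,1)$, $Z_{r,1}$ denotes the random variable $Z_{r,1}=(G_{r,1}+G_{1-r,1})/G_{r,1}$, where $G_{r,1}$, $G_{1-r,1}$ are independent gamma random variables with shape parameters $r$, $1-r$ and scale parameter $1$ (density $x^{s-1}e^{-x}/\Gamma(s)$, $x>0$, for shape $s$); equivalently $Z_{r,1}$ has density $\frac{1}{\Gamma(1-r)\Gamma(r)}\cdot\frac{\mathbf{1}(z\ge1)}{(z-1)^r z}$. For $r=1$, $Z_{1,1}\equiv1$. *)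

theory Defs
  imports "HOL-Probability.Probability"
begin

definition linnik_cf :: "real \<Rightarrow> real \<Rightarrow> real \<Rightarrow> complex" where
  "linnik_cf \<alpha> \<nu> t = complex_of_real ((1 + \<bar>t\<bar> powr \<alpha>) powr (- \<nu>))"

text \<open>Density of Z_{r,1} for 0 < r < 1.\<close>
definition Z_density :: "real \<Rightarrow> real \<Rightarrow> real" where
  "Z_density r z = (if 1 < z then 1 / (Gamma (1 - r) * Gamma r) * (1 / ((z - 1) powr r * z)) else 0)"

end

theory Submission imports Defs begin

lemma gamma_nn1:
  assumes p: "p > 0"
  shows "(\<integral>\<^sup>+t. ennreal (indicator {0<..} t * t powr (p-1) * exp (-t)) \<partial>lborel) = ennreal (Gamma p)"
proof -
  have h: "((\<lambda>t. t powr (p - 1) / exp t) has_integral Gamma p) {0..}"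
    using Gamma_integral_real[OF p] .
  have eq: "(\<lambda>t::real. indicator {0<..} t * t powr (p-1) * exp (-t)) = (\<lambda>t. if t \<in> {0..} then t powr (p - 1) / exp t else 0)"
    by (auto simp: fun_eq_iff indicator_def exp_minus field_simps)
  have "((\<lambda>t::real. indicator {0<..} t * t powr (p-1) * exp (-t)) has_integral Gamma p) UNIV"
    unfolding eq has_integral_restrict_UNIV by (rule h)
  then show ?thesis
    by (intro nn_integral_has_integral_lborel) (auto)
qed

lemma gamma_nn:
  assumes p: "p > 0" and c: "c > 0"
  shows "(\<integral>\<^sup>+t. ennreal (indicator {0<..} t * t powr (p-1) * exp (-c*t)) \<partial>lborel) = ennreal (Gamma p * c powr (-p))"
proof -
  let ?f = "\<lambda>t. ennreal (indicator {0<..} t * t powr (p-1) * exp (-c*t))"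
  have "(\<integral>\<^sup>+t. ?f t \<partial>lborel) = \<bar>1/c\<bar> * (\<integral>\<^sup>+x. ?f (0 + (1/c) * x) \<partial>lborel)"
    by (rule nn_integral_real_affine) (use c in auto)
  also have "(\<lambda>x. ?f (0 + (1/c) * x)) = (\<lambda>x. ennreal (c powr (1-p)) * ennreal (indicator {0<..} x * x powr (p-1) * exp (-x)))"
  proof
    fix x :: real
    show "?f (0 + (1/c) * x) = ennreal (c powr (1-p)) * ennreal (indicator {0<..} x * x powr (p-1) * exp (-x))"
      using c by (auto simp: indicator_def powr_divide powr_diff ennreal_mult[symmetric] field_simps zero_less_mult_iff)
  qed
  also have "(\<integral>\<^sup>+x. ennreal (c powr (1-p)) * ennreal (indicator {0<..} x * x powr (p-1) * exp (-x)) \<partial>lborel) = ennreal (c powr (1-p)) * ennreal (Gamma p)"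
    by (subst nn_integral_cmult) (auto simp: gamma_nn1[OF p])
  also have "\<bar>1/c\<bar> * (ennreal (c powr (1-p)) * ennreal (Gamma p)) = ennreal (Gamma p * c powr (-p))"
    using c p by (auto simp: ennreal_mult[symmetric] powr_diff Gamma_real_pos field_simps powr_minus)
  finally show ?thesis .
qed

lemma key_int:
  assumes nu: "0 < \<nu>" "\<nu> < 1" and a: "a > 0"
  shows "(\<integral>\<^sup>+w. ennreal (indicator {0<..} w * w powr (-\<nu>) / (w + a)) \<partial>lborel)
       = ennreal (Gamma \<nu> * Gamma (1-\<nu>) * a powr (-\<nu>))"
proof -
  define F where "F = (\<lambda>w x::real. ennreal (indicator {0<..} w * w powr (-\<nu>)) * ennreal (indicator {0<..} x * exp (-(w+a)*x)))"
  have Fm: "case_prod F \<in> borel_measurable (lborel \<Otimes>\<^sub>M lborel)"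
    unfolding F_def by measurable
  have "(\<integral>\<^sup>+w. ennreal (indicator {0<..} w * w powr (-\<nu>) / (w + a)) \<partial>lborel)
      = (\<integral>\<^sup>+w. (\<integral>\<^sup>+x. F w x \<partial>lborel) \<partial>lborel)"
  proof (rule nn_integral_cong)
    fix w :: real
    show "ennreal (indicator {0<..} w * w powr (-\<nu>) / (w + a)) = (\<integral>\<^sup>+x. F w x \<partial>lborel)"
    proof (cases "w > 0")
      case True
      have "(\<integral>\<^sup>+x. F w x \<partial>lborel) = ennreal (w powr (-\<nu>)) * (\<integral>\<^sup>+x. ennreal (indicator {0<..} x * x powr (1-1) * exp (-(w+a)*x)) \<partial>lborel)"
        unfolding F_def using True
        by (subst nn_integral_cmult[symmetric]) (auto intro!: nn_integral_cong simp: indicator_def)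
      also have "\<dots> = ennreal (w powr (-\<nu>)) * ennreal (Gamma 1 * (w+a) powr (-1))"
        using True a by (subst gamma_nn) auto
      also have "\<dots> = ennreal (indicator {0<..} w * w powr (-\<nu>) / (w + a))"
        using True a by (auto simp: ennreal_mult[symmetric] powr_minus_divide divide_simps)
      finally show ?thesis by simp
    next
      case False
      then show ?thesis by (simp add: F_def indicator_def)
    qed
  qed
  also have "\<dots> = (\<integral>\<^sup>+x. (\<integral>\<^sup>+w. F w x \<partial>lborel) \<partial>lborel)"
    using lborel_pair.Fubini'[OF Fm] by simp
  also have "\<dots> = (\<integral>\<^sup>+x. ennreal (Gamma (1-\<nu>)) * ennreal (indicator {0<..} x * x powr (\<nu> - 1) * exp (-a*x)) \<partial>lborel)"
  proof (rule nn_integral_cong)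
    fix x :: real
    show "(\<integral>\<^sup>+w. F w x \<partial>lborel) = ennreal (Gamma (1-\<nu>)) * ennreal (indicator {0<..} x * x powr (\<nu> - 1) * exp (-a*x))"
    proof (cases "x > 0")
      case True
      have "(\<integral>\<^sup>+w. F w x \<partial>lborel) = ennreal (exp (-a*x)) * (\<integral>\<^sup>+w. ennreal (indicator {0<..} w * w powr ((1-\<nu>)-1) * exp (-x*w)) \<partial>lborel)"
        unfolding F_def using True
        by (subst nn_integral_cmult[symmetric]) (auto intro!: nn_integral_cong simp: indicator_def ennreal_mult[symmetric] exp_add[symmetric] algebra_simps)
      also have "\<dots> = ennreal (exp (-a*x)) * ennreal (Gamma (1-\<nu>) * x powr (-(1-\<nu>)))"
        using True nu by (subst gamma_nn) auto
      also have "\<dots> = ennreal (Gamma (1-\<nu>)) * ennreal (indicator {0<..} x * x powr (\<nu> - 1) * exp (-a*x))"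
        using True nu by (auto simp: ennreal_mult[symmetric] Gamma_real_pos mult_ac)
      finally show ?thesis .
    next
      case False
      then show ?thesis by (simp add: F_def indicator_def)
    qed
  qed
  also have "\<dots> = ennreal (Gamma (1-\<nu>)) * ennreal (Gamma \<nu> * a powr (-\<nu>))"
    using nu a gamma_nn[of \<nu> a] by (subst nn_integral_cmult) auto
  also have "\<dots> = ennreal (Gamma \<nu> * Gamma (1-\<nu>) * a powr (-\<nu>))"
    using nu by (auto simp: ennreal_mult[symmetric] Gamma_real_pos mult_ac)
  finally show ?thesis .
qed

lemma Z_density_nonneg: "0 < r \<Longrightarrow> r < 1 \<Longrightarrow> 0 \<le> Z_density r z"
  unfolding Z_density_def by (auto simp: Gamma_real_pos)

lemma Z_density_meas[measurable]: "Z_density r \<in> borel_measurable borel"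
  unfolding Z_density_def by measurable

lemma dens_int:
  assumes nu: "0 < \<nu>" "\<nu> < 1" and s: "s \<ge> 0"
  shows "(\<integral>z. Z_density \<nu> z * (z / (z + s)) \<partial>lborel) = (1 + s) powr (-\<nu>)"
proof -
  define C where "C = 1 / (Gamma (1 - \<nu>) * Gamma \<nu>)"
  have Cpos: "C > 0" unfolding C_def using nu by (auto simp: Gamma_real_pos)
  have nn: "0 \<le> Z_density \<nu> z * (z / (z + s))" for z
    using Z_density_nonneg[OF nu, of z] s by (cases "z > 1") (auto simp: Z_density_def Gamma_real_pos nu)
  have "(\<integral>\<^sup>+z. ennreal (Z_density \<nu> z * (z / (z + s))) \<partial>lborel)
      = ennreal \<bar>1::real\<bar> * (\<integral>\<^sup>+w. ennreal (Z_density \<nu> (1 + 1 * w) * ((1 + 1 * w) / ((1 + 1 * w) + s))) \<partial>lborel)"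
    by (rule nn_integral_real_affine) auto
  also have "\<dots> = (\<integral>\<^sup>+w. ennreal C * ennreal (indicator {0<..} w * w powr (-\<nu>) / (w + (1 + s))) \<partial>lborel)"
  proof (simp only: mult_1 abs_one ennreal_1, rule nn_integral_cong)
    fix w :: real
    show "ennreal (Z_density \<nu> (1 + w) * ((1 + w) / (1 + w + s))) = ennreal C * ennreal (indicator {0<..} w * w powr (-\<nu>) / (w + (1 + s)))"
    proof (cases "w > 0")
      case True
      have "Z_density \<nu> (1 + w) * ((1 + w) / (1 + w + s)) = C * (indicator {0<..} w * w powr (-\<nu>) / (w + (1 + s)))"
      proof -
        have g: "Gamma (1 - \<nu>) * Gamma \<nu> > 0" using nu by (simp add: Gamma_real_pos)
        have p: "w powr \<nu> > 0" using True by simp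
        show ?thesis using True s g p
          by (simp add: Z_density_def C_def powr_minus divide_simps)
      qed
      moreover have "0 \<le> indicator {0<..} w * w powr (-\<nu>) / (w + (1 + s))" using True s by auto
      ultimately show ?thesis using Cpos by (simp only: ennreal_mult[symmetric] mult.assoc times_divide_eq_right)
    next
      case False
      then show ?thesis by (simp add: Z_density_def indicator_def)
    qed
  qed
  also have "\<dots> = ennreal C * ennreal (Gamma \<nu> * Gamma (1-\<nu>) * (1 + s) powr (-\<nu>))"
    using s by (subst nn_integral_cmult) (auto simp: key_int[OF nu])
  also have "\<dots> = ennreal ((1 + s) powr (-\<nu>))"
  proof -
    have "Gamma \<nu> > 0" "Gamma (1-\<nu>) > 0" using nu by (auto intro: Gamma_real_pos)
    then show ?thesis by (simp add: C_def ennreal_mult[symmetric])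
  qed
  finally have *: "(\<integral>\<^sup>+z. ennreal (Z_density \<nu> z * (z / (z + s))) \<partial>lborel) = ennreal ((1 + s) powr (-\<nu>))" .
  show ?thesis
    by (subst integral_eq_nn_integral) (auto simp del: times_divide_eq_right simp: nn * powr_nonneg_iff)
qed

lemma g_simp:
  fixes z t \<alpha> :: real
  assumes z: "z > 0" and a: "\<alpha> > 0"
  shows "(1 + \<bar>t * z powr (- 1 / \<alpha>)\<bar> powr \<alpha>) powr (-1) = z / (z + \<bar>t\<bar> powr \<alpha>)"
proof -
  have "\<bar>t * z powr (- 1 / \<alpha>)\<bar> powr \<alpha> = \<bar>t\<bar> powr \<alpha> * (z powr (- 1 / \<alpha>)) powr \<alpha>"
  proof -
    have "\<bar>t * z powr (- 1 / \<alpha>)\<bar> = \<bar>t\<bar> * z powr (- 1 / \<alpha>)" by (simp only: abs_mult abs_of_nonneg[OF powr_ge_zero])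
    then show ?thesis by (simp add: powr_mult)
  qed
  also have "(z powr (- 1 / \<alpha>)) powr \<alpha> = 1 / z"
  proof -
    have "(z powr (- 1 / \<alpha>)) powr \<alpha> = z powr ((- 1 / \<alpha>) * \<alpha>)" by (rule powr_powr)
    also have "(- 1 / \<alpha>) * \<alpha> = -1" using a by simp
    finally show ?thesis using z by (simp add: powr_minus_divide)
  qed
  finally have e: "\<bar>t * z powr (- 1 / \<alpha>)\<bar> powr \<alpha> = \<bar>t\<bar> powr \<alpha> / z" by simp
  have "0 \<le> \<bar>t\<bar> powr \<alpha>" by simp
  then show ?thesis unfolding e using z
    by (simp add: powr_minus_divide divide_simps add_pos_nonneg)
qed

theorem theorem3:
  fixes M :: "'a measure" and X L Z :: "'a \<Rightarrow> real" and \<alpha> \<nu> :: real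
  assumes "prob_space M"
    and "0 < \<nu>" and "\<nu> \<le> 1" and "0 < \<alpha>" and "\<alpha> \<le> 2"
    and "X \<in> borel_measurable M" and "L \<in> borel_measurable M" and "Z \<in> borel_measurable M"
    and "\<forall>t. char (distr M borel X) t = linnik_cf \<alpha> \<nu> t"
    and "\<forall>t. char (distr M borel L) t = linnik_cf \<alpha> 1 t"
    and "\<nu> < 1 \<Longrightarrow> distributed M lborel Z (\<lambda>z. ennreal (Z_density \<nu> z))"
    and "\<nu> = 1 \<Longrightarrow> (AE \<omega> in M. Z \<omega> = 1)"
    and "prob_space.indep_var M borel L borel Z"
  shows "distr M borel X = distr M borel (\<lambda>\<omega>. L \<omega> * Z \<omega> powr (- 1 / \<alpha>))"
proof -
  interpret prob_space M by fact
  note Xm[measurable] = assms(6) and Lm[measurable] = assms(7) and Zm[measurable] = assms(8)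
  define Y where "Y = (\<lambda>\<omega>. L \<omega> * Z \<omega> powr (- 1 / \<alpha>))"
  have Ym[measurable]: "Y \<in> borel_measurable M" unfolding Y_def by measurable
  let ?PL = "distr M borel L" and ?PZ = "distr M borel Z"
  interpret PP: pair_prob_space ?PL ?PZ
    by (intro pair_prob_space.intro pair_sigma_finite.intro prob_space_imp_sigma_finite prob_space_distr) auto
  have joint: "?PL \<Otimes>\<^sub>M ?PZ = distr M (borel \<Otimes>\<^sub>M borel) (\<lambda>x. (L x, Z x))"
    using assms(13) indep_var_distribution_eq by blast
  have "char (distr M borel Y) t = linnik_cf \<alpha> \<nu> t" for t
  proof -
    define s where "s = \<bar>t\<bar> powr \<alpha>"
    have s0: "s \<ge> 0" unfolding s_def by simp
    define g where "g = (\<lambda>z::real. (1 + \<bar>t * z powr (- 1 / \<alpha>)\<bar> powr \<alpha>) powr (-1))"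
    have gm[measurable]: "g \<in> borel_measurable borel" unfolding g_def by measurable
    define f where "f = (\<lambda>(l::real) (z::real). iexp (t * (l * z powr (- 1 / \<alpha>))))"
    have fm[measurable]: "case_prod f \<in> borel_measurable (borel \<Otimes>\<^sub>M borel)"
      unfolding f_def by measurable
    have fint: "integrable (?PL \<Otimes>\<^sub>M ?PZ) (case_prod f)"
      by (rule PP.P.integrable_const_bound[where B=1]) (auto simp: f_def norm_exp_i_times measurable_pair_measure)
    have "char (distr M borel Y) t = (\<integral>\<omega>. iexp (t * Y \<omega>) \<partial>M)"
      unfolding char_def by (subst integral_distr) auto
    also have "\<dots> = (\<integral>p. case_prod f p \<partial>distr M (borel \<Otimes>\<^sub>M borel) (\<lambda>x. (L x, Z x)))"
      by (subst integral_distr) (auto simp: f_def Y_def)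
    also have "\<dots> = (\<integral>z. (\<integral>l. f l z \<partial>?PL) \<partial>?PZ)"
      unfolding joint[symmetric] using PP.integral_snd[OF fint] by simp
    also have "\<dots> = (\<integral>z. complex_of_real (g z) \<partial>?PZ)"
    proof (rule Bochner_Integration.integral_cong[OF refl])
      fix z
      have "(\<integral>l. f l z \<partial>?PL) = char ?PL (t * z powr (- 1 / \<alpha>))"
        unfolding char_def f_def by (simp add: mult_ac)
      also have "\<dots> = complex_of_real (g z)"
        using assms(10) by (simp add: linnik_cf_def g_def)
      finally show "(\<integral>l. f l z \<partial>?PL) = complex_of_real (g z)" .
    qed
    also have "\<dots> = complex_of_real (\<integral>z. g z \<partial>?PZ)" by simp
    also have "(\<integral>z. g z \<partial>?PZ) = (1 + s) powr (-\<nu>)"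
    proof (cases "\<nu> = 1")
      case True
      have "(\<integral>z. g z \<partial>?PZ) = (\<integral>\<omega>. g (Z \<omega>) \<partial>M)" by (subst integral_distr) auto
      also have "\<dots> = (\<integral>\<omega>. g 1 \<partial>M)"
        using assms(12)[OF True] by (intro integral_cong_AE) auto
      also have "\<dots> = (1 + s) powr (-\<nu>)" using True by (simp add: g_def s_def prob_space)
      finally show ?thesis .
    next
      case False
      then have nu1: "\<nu> < 1" using assms(3) by simp
      have dist: "?PZ = density lborel (\<lambda>z. ennreal (Z_density \<nu> z))"
      proof -
        have "?PZ = distr M lborel Z" by (rule distr_cong) auto
        then show ?thesis using assms(11)[OF nu1] unfolding distributed_def by simp
      qed
      have "(\<integral>z. g z \<partial>?PZ) = (\<integral>z. Z_density \<nu> z * g z \<partial>lborel)"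
        unfolding dist
        by (subst integral_density) (auto simp: Z_density_nonneg[OF assms(2) nu1])
      also have "\<dots> = (\<integral>z. Z_density \<nu> z * (z / (z + s)) \<partial>lborel)"
      proof (rule Bochner_Integration.integral_cong[OF refl])
        fix z :: real
        show "Z_density \<nu> z * g z = Z_density \<nu> z * (z / (z + s))"
        proof (cases "z > 1")
          case True
          then show ?thesis using g_simp[of z \<alpha> t] assms(4) by (simp add: g_def s_def)
        next
          case False
          then show ?thesis by (simp add: Z_density_def)
        qed
      qed
      also have "\<dots> = (1 + s) powr (-\<nu>)" using dens_int[OF assms(2) nu1 s0] .
      finally show ?thesis .
    qed
    finally show ?thesis by (simp add: linnik_cf_def s_def)
  qed
  then have "char (distr M borel X) = char (distr M borel Y)"
    using assms(9) by auto
  then have "distr M borel X = distr M borel Y"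
    by (intro Levy_uniqueness) auto
  then show ?thesis unfolding Y_def .
qed

end
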